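(* Let all issues be binary. Fix a vote profile $a$, an agent $j$ and an issue $i$. Consider three uncertainty parameter vectors $r_j,q_j,\hat q_j\in\mathbb R_{\ge0}^p$: - $q_j$ differs from $r_j$ only on one issue $k\ne i$, with $r_j^k<q_j^k$; - $\hat q_j$ differs from $r_j$ only on issue $i$, with $r_j^i<\hat q_j^i$. Let $LD^i_j$, $LQ^i_j$ and $\widehat{LQ}^i_j$ be the sets of local dominance improvement steps of $j$ on issue $i$ at $a$ under $S=\tilde S_{-j}(a;r_j)$, $S=\tilde S_{-j}(a;q_j)$ and $S=\tilde S_{-j}(a;\hat q_j)$, respectively. Then $$LQ^i_j\subseteq LD^i_j\subseteq \widehat{LQ}^i_j.$$
   Context: Issues $\mathcal P=\{1,\dots,p\}$, each with a finite candidate set $D_i$; alternatives are $\mathcal D=\prod_i D_i$. Binary issues means $D_i=\{0,1\}$ for all $i$. There are $n$ agents, and each agent $j$ has a strict linear order $\succ_j$ over $\mathcal D$. A vote profile is $a\in\mathcal D^n$. Score tuples and outcomes: - A score tuple $v=(v^i)_{i\in\mathcal P}$ consists of vectors $v^i\in\mathbb N^{D_i}$. - Plurality outcome $f(v)=(f^i(v))_i$: $f^i(v)$ is the candidate of maximum score $v^i(c)$, with ties broken lexicographically. - For a vote $b\in\mathcal D$, $v+b$ adds one to $v^i(b^i)$ for every issue $i$. - $s_{-j}(a)$ is the score tuple of $a$ without agent $j$'s vote. Uncertainty sets: a distance on score vectors of issue $i$ is candidate-wise if $\delta(s,\tilde s)=\max_{c\in D_i}\hat\delta(s(c),\tilde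 s(c))$ for a monotone function $\hat\delta$. Examples are the $\ell_\infty$ distance $\hat\delta(s,\tilde s)=|s-\tilde s|$ and the multiplicative distance. Given uncertainty parameters $r_j=(r_j^i)_i$, define $$\tilde S^i_{-j}(a;r^i_j)=\{v^i:\delta(v^i,s^i_{-j}(a))\le r^i_j\}, \qquad \tilde S_{-j}(a;r_j)=\prod_i\tilde S^i_{-j}(a;r_j^i).$$ Local dominance: a vote $\hat a_j$ $S$-beats $a_j$ if there is $v\in S$ with $f(v+\hat a_j)\succ_j f(v+a_j)$. The vote $\hat a_j$ $S$-dominates $a_j$ if $\hat a_j$ $S$-beats $a_j$ and $a_j$ does not $S$-beat $\hat a_j$. The set of local dominance improvement (LDI) steps of $j$ on issue $i$ (under $S$) is the set of votes that satisfy all of the following: - they $S$-dominate $a_j$; - they differ from $a_j$ only on issue $i$; - they are not $S$-dominated by any vote differing from $a_j$ only on issue $i$. *)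

theory Defs
  imports Main "HOL-Library.Extended_Real"
begin

(* Binary issues 0..<p, candidate set D_i = {False, True} (False = 0, True = 1).
   An alternative / vote is a function nat => bool, extensional: False outside {..<p}. *)
definition alts :: "nat \<Rightarrow> (nat \<Rightarrow> bool) set" where
  "alts p = {b. \<forall>i. p \<le> i \<longrightarrow> b i = False}"

(* score tuple: v i c = score of candidate c on issue i *)
type_synonym score = "nat \<Rightarrow> bool \<Rightarrow> nat"

(* plurality outcome, ties broken lexicographically (in favour of 0 = False) *)
definition outcome :: "nat \<Rightarrow> score \<Rightarrow> (nat \<Rightarrow> bool)" where
  "outcome p v = (\<lambda>i. if i < p then v i False < v i True else False)"

definition add_vote :: "score \<Rightarrow> (nat \<Rightarrow> bool) \<Rightarrow> score" where
  "add_vote v b = (\<lambda>i c. v i c + (if b i = c then 1 else 0))"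

(* s_{-j}(a): profile a j' = vote of agent j' (agents 0..<n) *)
definition score_wo :: "nat \<Rightarrow> (nat \<Rightarrow> nat \<Rightarrow> bool) \<Rightarrow> nat \<Rightarrow> score" where
  "score_wo n a j = (\<lambda>i c. card {j'. j' < n \<and> j' \<noteq> j \<and> a j' i = c})"

definition monotone_dhat :: "(nat \<Rightarrow> nat \<Rightarrow> real) \<Rightarrow> bool" where
  "monotone_dhat dh \<longleftrightarrow>
     (\<forall>x. dh x x = 0) \<and>
     (\<forall>x y z. (x \<le> y \<and> y \<le> z \<or> z \<le> y \<and> y \<le> x) \<longrightarrow> dh x y \<le> dh x z \<and> dh y x \<le> dh z x)"

definition cw_dist :: "(nat \<Rightarrow> nat \<Rightarrow> real) \<Rightarrow> (bool \<Rightarrow> nat) \<Rightarrow> (bool \<Rightarrow> nat) \<Rightarrow> real" where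
  "cw_dist dh s t = max (dh (s False) (t False)) (dh (s True) (t True))"

definition unc_set :: "(nat \<Rightarrow> nat \<Rightarrow> real) \<Rightarrow> nat \<Rightarrow> nat \<Rightarrow> (nat \<Rightarrow> nat \<Rightarrow> bool) \<Rightarrow> nat
     \<Rightarrow> (nat \<Rightarrow> real) \<Rightarrow> score set" where
  "unc_set dh p n a j r = {v. \<forall>i<p. cw_dist dh (v i) (score_wo n a j i) \<le> r i}"

definition beats :: "nat \<Rightarrow> ((nat \<Rightarrow> bool) \<Rightarrow> (nat \<Rightarrow> bool) \<Rightarrow> bool) \<Rightarrow> score set
     \<Rightarrow> (nat \<Rightarrow> bool) \<Rightarrow> (nat \<Rightarrow> bool) \<Rightarrow> bool" where
  "beats p pref S b' b \<longleftrightarrow> (\<exists>v\<in>S. pref (outcome p (add_vote v b')) (outcome p (add_vote v b)))"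

definition dominates :: "nat \<Rightarrow> ((nat \<Rightarrow> bool) \<Rightarrow> (nat \<Rightarrow> bool) \<Rightarrow> bool) \<Rightarrow> score set
     \<Rightarrow> (nat \<Rightarrow> bool) \<Rightarrow> (nat \<Rightarrow> bool) \<Rightarrow> bool" where
  "dominates p pref S b' b \<longleftrightarrow> beats p pref S b' b \<and> \<not> beats p pref S b b'"

definition differs_only_on :: "nat \<Rightarrow> nat \<Rightarrow> (nat \<Rightarrow> bool) \<Rightarrow> (nat \<Rightarrow> bool) \<Rightarrow> bool" where
  "differs_only_on p i b' b \<longleftrightarrow> (\<forall>l<p. l \<noteq> i \<longrightarrow> b' l = b l)"

definition LDI :: "nat \<Rightarrow> ((nat \<Rightarrow> bool) \<Rightarrow> (nat \<Rightarrow> bool) \<Rightarrow> bool) \<Rightarrow> score set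
     \<Rightarrow> (nat \<Rightarrow> bool) \<Rightarrow> nat \<Rightarrow> (nat \<Rightarrow> bool) set" where
  "LDI p pref S b i = {b' \<in> alts p. dominates p pref S b' b \<and> differs_only_on p i b' b \<and>
      \<not> (\<exists>b''\<in>alts p. differs_only_on p i b'' b \<and> dominates p pref S b'' b')}"

definition strict_linear_on :: "'a set \<Rightarrow> ('a \<Rightarrow> 'a \<Rightarrow> bool) \<Rightarrow> bool" where
  "strict_linear_on A R \<longleftrightarrow>
     (\<forall>x y. R x y \<longrightarrow> x \<in> A \<and> y \<in> A) \<and>
     (\<forall>x\<in>A. \<not> R x x) \<and>
     (\<forall>x\<in>A. \<forall>y\<in>A. \<forall>z\<in>A. R x y \<longrightarrow> R y z \<longrightarrow> R x z) \<and>
     (\<forall>x\<in>A. \<forall>y\<in>A. x \<noteq> y \<longrightarrow> R x y \<or> R y x)"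

end

theory Submission
  imports Defs
begin

lemma out_alts: "outcome p v \<in> alts p"
  by (simp add: outcome_def alts_def)

lemma out_agree: "differs_only_on p i b' b \<Longrightarrow> l \<noteq> i \<Longrightarrow>
   outcome p (add_vote v b') l = outcome p (add_vote v b) l"
  by (simp add: outcome_def add_vote_def differs_only_on_def)

lemma out_loc: "w l = v l \<Longrightarrow> outcome p (add_vote w b) l = outcome p (add_vote v b) l"
  by (simp add: outcome_def add_vote_def)

lemma out_piv: "i < p \<Longrightarrow> b i \<noteq> b' i \<Longrightarrow>
   outcome p (add_vote v b) i \<noteq> outcome p (add_vote v b') i \<Longrightarrow>
   outcome p (add_vote v b) i = b i"
  by (cases "b i"; cases "b' i"; simp add: outcome_def add_vote_def; linarith)

lemma out_diff_i: "differs_only_on p i b' b \<Longrightarrow>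
   outcome p (add_vote v b') \<noteq> outcome p (add_vote v b) \<Longrightarrow>
   outcome p (add_vote v b') i \<noteq> outcome p (add_vote v b) i"
proof
  assume d: "differs_only_on p i b' b" and ne: "outcome p (add_vote v b') \<noteq> outcome p (add_vote v b)"
    and eq: "outcome p (add_vote v b') i = outcome p (add_vote v b) i"
  have "outcome p (add_vote v b') = outcome p (add_vote v b)"
  proof
    fix l show "outcome p (add_vote v b') l = outcome p (add_vote v b) l"
      using eq out_agree[OF d] by (cases "l = i") auto
  qed
  with ne show False by simp
qed

lemma alts_eq: "b \<in> alts p \<Longrightarrow> c \<in> alts p \<Longrightarrow> differs_only_on p i b d \<Longrightarrow>
   differs_only_on p i c d \<Longrightarrow> b i = c i \<Longrightarrow> b = c"
  apply (rule ext)
  subgoal for l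
    by (cases "l < p"; cases "l = i"; auto simp: alts_def differs_only_on_def)
  done

lemma unc_mono: "\<forall>l<p. r l \<le> q l \<Longrightarrow> unc_set dh p n a j r \<subseteq> unc_set dh p n a j q"
  unfolding unc_set_def by (smt (verit) mem_Collect_eq subsetI)

lemma unc_upd: "w \<in> unc_set dh p n a j Q \<Longrightarrow> v \<in> unc_set dh p n a j R \<Longrightarrow>
   \<forall>l<p. l \<noteq> k \<longrightarrow> Q l = R l \<Longrightarrow> w(k := v k) \<in> unc_set dh p n a j R"
  by (auto simp: unc_set_def)

lemma center: "monotone_dhat dh \<Longrightarrow> \<forall>l<p. 0 \<le> r l \<Longrightarrow> score_wo n a j \<in> unc_set dh p n a j r"
  by (simp add: unc_set_def cw_dist_def monotone_dhat_def)

lemma third_auto: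
  assumes "b \<in> alts p" "b' \<in> alts p" "differs_only_on p i b' b" "dominates p pr S b' b"
  shows "\<not> (\<exists>b''\<in>alts p. differs_only_on p i b'' b \<and> dominates p pr S b'' b')"
proof
  assume "\<exists>b''\<in>alts p. differs_only_on p i b'' b \<and> dominates p pr S b'' b'"
  then obtain b'' where b'': "b'' \<in> alts p" "differs_only_on p i b'' b" "dominates p pr S b'' b'" by blast
  have "b'' \<noteq> b'" using b''(3) unfolding dominates_def by blast
  hence 1: "b'' i \<noteq> b' i" using alts_eq[OF b''(1) assms(2) b''(2) assms(3)] by blast
  have "b' \<noteq> b" using assms(4) unfolding dominates_def by blast
  moreover have "differs_only_on p i b b" by (simp add: differs_only_on_def)
  ultimately have 2: "b' i \<noteq> b i" using alts_eq[OF assms(2) assms(1) assms(3)] by blast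
  from 1 2 have "b'' i = b i" by blast
  hence "b'' = b" using alts_eq[OF b''(1) assms(1) b''(2)] by (simp add: differs_only_on_def)
  thus False using b''(3) assms(4) unfolding dominates_def by blast
qed

theorem theorem1:
  fixes p n :: nat
    and pref :: "nat \<Rightarrow> (nat \<Rightarrow> bool) \<Rightarrow> (nat \<Rightarrow> bool) \<Rightarrow> bool"
    and a :: "nat \<Rightarrow> nat \<Rightarrow> bool"
    and dh :: "nat \<Rightarrow> nat \<Rightarrow> real"
    and j i k :: nat
    and r q qh :: "nat \<Rightarrow> real"
  assumes dh: "monotone_dhat dh"
    and prefs: "\<forall>j'<n. strict_linear_on (alts p) (pref j')"
    and profile: "\<forall>j'<n. a j' \<in> alts p"
    and j: "j < n" and i: "i < p" and k: "k < p" "k \<noteq> i"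
    and r_nonneg: "\<forall>l<p. 0 \<le> r l"
    and q_nonneg: "\<forall>l<p. 0 \<le> q l"
    and qh_nonneg: "\<forall>l<p. 0 \<le> qh l"
    and q: "\<forall>l<p. l \<noteq> k \<longrightarrow> q l = r l" "r k < q k"
    and qh: "\<forall>l<p. l \<noteq> i \<longrightarrow> qh l = r l" "r i < qh i"
  shows "LDI p (pref j) (unc_set dh p n a j q) (a j) i \<subseteq> LDI p (pref j) (unc_set dh p n a j r) (a j) i
       \<and> LDI p (pref j) (unc_set dh p n a j r) (a j) i \<subseteq> LDI p (pref j) (unc_set dh p n a j qh) (a j) i"
proof -
  define b where "b = a j"
  define P where "P = pref j"
  define Sr where "Sr = unc_set dh p n a j r"
  define Sq where "Sq = unc_set dh p n a j q"
  define Sh where "Sh = unc_set dh p n a j qh"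
  have bA: "b \<in> alts p" using profile j b_def by auto
  have lin: "strict_linear_on (alts p) P" using prefs j P_def by auto
  have irr: "\<And>x. \<not> P x x" using lin unfolding strict_linear_on_def by blast
  have tot: "\<And>x y. x \<in> alts p \<Longrightarrow> y \<in> alts p \<Longrightarrow> x \<noteq> y \<Longrightarrow> P x y \<or> P y x"
    using lin unfolding strict_linear_on_def by blast
  have rq: "Sr \<subseteq> Sq" unfolding Sr_def Sq_def
    by (rule unc_mono) (use q in \<open>auto intro: less_imp_le\<close>)
  have rh: "Sr \<subseteq> Sh" unfolding Sr_def Sh_def
    by (rule unc_mono) (use qh in \<open>auto intro: less_imp_le\<close>)
  have part1: "dominates p P Sr b' b"
    if b': "b' \<in> alts p" "differs_only_on p i b' b" "dominates p P Sq b' b" for b'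
  proof -
    from b'(3) obtain v where v: "v \<in> Sq" "P (outcome p (add_vote v b')) (outcome p (add_vote v b))"
      and nb: "\<not> beats p P Sq b b'"
      by (auto simp: dominates_def beats_def)
    define v' where "v' = v(k := score_wo n a j k)"
    have v'S: "v' \<in> Sr" unfolding v'_def Sr_def
      by (rule unc_upd[OF v(1)[unfolded Sq_def] center[OF dh r_nonneg]]) (use q in auto)
    have "outcome p (add_vote v b') \<noteq> outcome p (add_vote v b)" using v(2) irr by auto
    hence d: "outcome p (add_vote v b') i \<noteq> outcome p (add_vote v b) i"
      using out_diff_i b'(2) by blast
    have "v' i = v i" using k(2) v'_def by simp
    hence "outcome p (add_vote v' b') i \<noteq> outcome p (add_vote v' b) i"
      using d out_loc[of v' i v p b'] out_loc[of v' i v p b] by simp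
    hence ne: "outcome p (add_vote v' b') \<noteq> outcome p (add_vote v' b)" by auto
    have "\<not> P (outcome p (add_vote v' b)) (outcome p (add_vote v' b'))"
      using nb v'S rq by (auto simp: beats_def)
    hence "P (outcome p (add_vote v' b')) (outcome p (add_vote v' b))"
      using tot[OF out_alts out_alts ne] by blast
    hence "beats p P Sr b' b" using v'S by (auto simp: beats_def)
    moreover have "\<not> beats p P Sr b b'" using nb rq by (auto simp: beats_def)
    ultimately show ?thesis by (simp add: dominates_def)
  qed
  have part2: "dominates p P Sh b' b"
    if b': "b' \<in> alts p" "differs_only_on p i b' b" "dominates p P Sr b' b" for b'
  proof -
    from b'(3) obtain v where v: "v \<in> Sr" "P (outcome p (add_vote v b')) (outcome p (add_vote v b))"
      and nb: "\<not> beats p P Sr b b'"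
      by (auto simp: dominates_def beats_def)
    have "b' \<noteq> b" using b'(3) by (auto simp: dominates_def)
    moreover have "differs_only_on p i b b" by (simp add: differs_only_on_def)
    ultimately have bi: "b i \<noteq> b' i" using alts_eq[OF b'(1) bA b'(2)] by blast
    have "outcome p (add_vote v b') \<noteq> outcome p (add_vote v b)" using v(2) irr by auto
    hence dv: "outcome p (add_vote v b) i \<noteq> outcome p (add_vote v b') i"
      using out_diff_i[OF b'(2)] by auto
    have vb: "outcome p (add_vote v b) i = b i" using out_piv[OF i bi dv] .
    have vb': "outcome p (add_vote v b') i = b' i" using out_piv[of i p b' b v] i bi dv by auto
    have "\<not> beats p P Sh b b'"
    proof
      assume "beats p P Sh b b'"
      then obtain w where w: "w \<in> Sh" "P (outcome p (add_vote w b)) (outcome p (add_vote w b'))"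
        by (auto simp: beats_def)
      define w' where "w' = w(i := v i)"
      have w'S: "w' \<in> Sr" unfolding w'_def Sr_def
        by (rule unc_upd[OF w(1)[unfolded Sh_def] v(1)[unfolded Sr_def]]) (use qh in auto)
      have "outcome p (add_vote w b') \<noteq> outcome p (add_vote w b)" using w(2) irr by auto
      hence dw: "outcome p (add_vote w b) i \<noteq> outcome p (add_vote w b') i"
        using out_diff_i[OF b'(2)] by auto
      have wb: "outcome p (add_vote w b) i = b i" using out_piv[OF i bi dw] .
      have wb': "outcome p (add_vote w b') i = b' i" using out_piv[of i p b' b w] i bi dw by auto
      have e1: "outcome p (add_vote w' b) = outcome p (add_vote w b)"
      proof
        fix l show "outcome p (add_vote w' b) l = outcome p (add_vote w b) l"
        proof (cases "l = i")
          case True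
          have "outcome p (add_vote w' b) i = outcome p (add_vote v b) i"
            by (rule out_loc) (simp add: w'_def)
          thus ?thesis using True vb wb by simp
        next
          case False thus ?thesis by (intro out_loc) (simp add: w'_def)
        qed
      qed
      have e2: "outcome p (add_vote w' b') = outcome p (add_vote w b')"
      proof
        fix l show "outcome p (add_vote w' b') l = outcome p (add_vote w b') l"
        proof (cases "l = i")
          case True
          have "outcome p (add_vote w' b') i = outcome p (add_vote v b') i"
            by (rule out_loc) (simp add: w'_def)
          thus ?thesis using True vb' wb' by simp
        next
          case False thus ?thesis by (intro out_loc) (simp add: w'_def)
        qed
      qed
      have "beats p P Sr b b'" unfolding beats_def using w'S w(2) e1 e2 by (intro bexI[of _ w']) auto
      thus False using nb by simp
    qed
    moreover have "beats p P Sh b' b" using b'(3) rh by (auto simp: dominates_def beats_def)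
    ultimately show ?thesis by (simp add: dominates_def)
  qed
  have "LDI p P Sq b i \<subseteq> LDI p P Sr b i"
  proof
    fix b' assume "b' \<in> LDI p P Sq b i"
    hence h: "b' \<in> alts p" "differs_only_on p i b' b" "dominates p P Sq b' b"
      by (auto simp: LDI_def)
    have "dominates p P Sr b' b" using part1[OF h] .
    thus "b' \<in> LDI p P Sr b i" using h third_auto[OF bA h(1,2)] by (auto simp: LDI_def)
  qed
  moreover have "LDI p P Sr b i \<subseteq> LDI p P Sh b i"
  proof
    fix b' assume "b' \<in> LDI p P Sr b i"
    hence h: "b' \<in> alts p" "differs_only_on p i b' b" "dominates p P Sr b' b"
      by (auto simp: LDI_def)
    have "dominates p P Sh b' b" using part2[OF h] .
    thus "b' \<in> LDI p P Sh b i" using h third_auto[OF bA h(1,2)] by (auto simp: LDI_def)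
  qed
  ultimately show ?thesis unfolding P_def b_def Sq_def Sr_def Sh_def by blast
qed

end
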